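(* In the reinforcement-learning network model described in the context, for every $\varepsilon>0$ there is a constant $C>0$ depending only on $(a_{kl})_{k,l\in\mathbb{V}}$ and $\varepsilon$ such that, for all $i,j\in\mathbb{V}$ with $i\sim j$ and all $n$ with $T_n\ge C$: if $x_n\in U_{ij}(\varepsilon)$ and $|H(x_{n+1})-H(x_n)|<\varepsilon/2$, then $x_{n+1}\in U_{ij}(2\varepsilon)$.
   Context: Let $G=(\mathbb{V},E)$ be a finite graph with adjacency $\sim$. Let $a_{ij}=a_{ji}\ge0$, $>0$ only if $i\sim j$. Let $(p_W)_{W\subseteq\mathbb{V}}$ be nonnegative with $\sum_Wp_W=1$; for $i\sim j$, $p_{ij}=\sum_{W:i,j\in W}p_W$; $p_{ij}=0$ if $i\not\sim j$. Assume some $a_{ij}p_{ij}>0$. Let $v^0_{ij}=v^0_{ji}\ge0$, $>0$ iff $i\sim j$. Process: $V^0_{ij}=v^0_{ij}$, $V^n_{ij}=0$ if $i\not\sim j$, $V^n_i=\sum_jV^n_{ij}$; at each time $n$ each vertex $i$ independently chooses a neighbour $j$ with probability $V^n_{ij}/V^n_i$; independently Nature picks $W_n$ with $\mathbb{P}(W_n=W)=p_W$, i.i.d.; if $i,j\in W_n$, $i\sim j$ and $i,j$ choose each other, then $V^{n+1}_{ij}=V^{n+1}_{ji}=V^n_{ij}+a_{ij}$, else unchanged. Let $T_n=\sum_{i,j}V^n_{ij}$ (ordered pairs), $x^n_{ij}=V^n_{ij}/T_n$, $x_n=(x^n_{ij})$. Let $h_1=\sum_{(i,j):a_{ij}p_{ij}>0}v^0_{ij}/\sum_{k,l}v^0_{kl}$;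 $\Delta$ is the set of arrays $x$ with $x_{ij}=x_{ji}\ge0$, $x_{ij}=0$ if $i\not\sim j$, $\sum_{i,j}x_{ij}=1$, $\sum_{(i,j):a_{ij}p_{ij}>0}x_{ij}\ge h_1$; $x_i=\sum_jx_{ij}$. $H(x)=\sum_{(i,j):x_{ij}>0}a_{ij}p_{ij}x_{ij}^2/(x_ix_j)$; for $x_{ij}>0$, $y_{ij}=a_{ij}p_{ij}x_{ij}/(x_ix_j)$. For $\varepsilon>0$, $U_{ij}(\varepsilon)=\{x\in\Delta:\ x_{ij}<\varepsilon\ \text{or}\ y_{ij}-H(x)\ge-\varepsilon\}$. *)

theory Defs
  imports Complex_Main
begin

text \<open>Vertex set = a finite type 'v. adj is the adjacency relation of the graph,
a the reinforcement weights, p the distribution of the random subset W.\<close>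

definition pp :: "('v \<Rightarrow> 'v \<Rightarrow> bool) \<Rightarrow> ('v set \<Rightarrow> real) \<Rightarrow> 'v \<Rightarrow> 'v \<Rightarrow> real" where
  "pp adj p i j = (if adj i j then (\<Sum>W \<in> {W. i \<in> W \<and> j \<in> W}. p W) else 0)"

definition Tot :: "('v::finite \<Rightarrow> 'v \<Rightarrow> real) \<Rightarrow> real" where
  "Tot V = (\<Sum>i\<in>UNIV. \<Sum>j\<in>UNIV. V i j)"

definition xnorm :: "('v::finite \<Rightarrow> 'v \<Rightarrow> real) \<Rightarrow> 'v \<Rightarrow> 'v \<Rightarrow> real" where
  "xnorm V i j = V i j / Tot V"

definition xrow :: "('v::finite \<Rightarrow> 'v \<Rightarrow> real) \<Rightarrow> 'v \<Rightarrow> real" where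
  "xrow x i = (\<Sum>j\<in>UNIV. x i j)"

definition Hfun :: "('v::finite \<Rightarrow> 'v \<Rightarrow> bool) \<Rightarrow> ('v \<Rightarrow> 'v \<Rightarrow> real) \<Rightarrow> ('v set \<Rightarrow> real)
    \<Rightarrow> ('v \<Rightarrow> 'v \<Rightarrow> real) \<Rightarrow> real" where
  "Hfun adj a p x = (\<Sum>(i,j) \<in> {(i,j). x i j > 0}.
      a i j * pp adj p i j * (x i j)^2 / (xrow x i * xrow x j))"

definition yfun :: "('v::finite \<Rightarrow> 'v \<Rightarrow> bool) \<Rightarrow> ('v \<Rightarrow> 'v \<Rightarrow> real) \<Rightarrow> ('v set \<Rightarrow> real)
    \<Rightarrow> ('v \<Rightarrow> 'v \<Rightarrow> real) \<Rightarrow> 'v \<Rightarrow> 'v \<Rightarrow> real" where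
  "yfun adj a p x i j = a i j * pp adj p i j * x i j / (xrow x i * xrow x j)"

definition h1 :: "('v::finite \<Rightarrow> 'v \<Rightarrow> bool) \<Rightarrow> ('v \<Rightarrow> 'v \<Rightarrow> real) \<Rightarrow> ('v set \<Rightarrow> real)
    \<Rightarrow> ('v \<Rightarrow> 'v \<Rightarrow> real) \<Rightarrow> real" where
  "h1 adj a p v0 = (\<Sum>(i,j) \<in> {(i,j). a i j * pp adj p i j > 0}. v0 i j) / Tot v0"

definition Delta :: "('v::finite \<Rightarrow> 'v \<Rightarrow> bool) \<Rightarrow> ('v \<Rightarrow> 'v \<Rightarrow> real) \<Rightarrow> ('v set \<Rightarrow> real)
    \<Rightarrow> ('v \<Rightarrow> 'v \<Rightarrow> real) \<Rightarrow> ('v \<Rightarrow> 'v \<Rightarrow> real) set" where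
  "Delta adj a p v0 = {x. (\<forall>i j. x i j = x j i \<and> x i j \<ge> 0 \<and> (\<not> adj i j \<longrightarrow> x i j = 0))
      \<and> (\<Sum>i\<in>UNIV. \<Sum>j\<in>UNIV. x i j) = 1
      \<and> (\<Sum>(i,j) \<in> {(i,j). a i j * pp adj p i j > 0}. x i j) \<ge> h1 adj a p v0}"

definition Uset :: "('v::finite \<Rightarrow> 'v \<Rightarrow> bool) \<Rightarrow> ('v \<Rightarrow> 'v \<Rightarrow> real) \<Rightarrow> ('v set \<Rightarrow> real)
    \<Rightarrow> ('v \<Rightarrow> 'v \<Rightarrow> real) \<Rightarrow> 'v \<Rightarrow> 'v \<Rightarrow> real \<Rightarrow> ('v \<Rightarrow> 'v \<Rightarrow> real) set" where
  "Uset adj a p v0 i j eps = {x \<in> Delta adj a p v0. x i j < eps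
      \<or> yfun adj a p x i j - Hfun adj a p x \<ge> - eps}"

text \<open>A realization of the process with positive probability at every step:
every vertex k (having a neighbour) chooses a neighbour c k, Nature picks W with p W > 0,
and exactly the edges {k,l} with k,l in W, k ~ l and mutual choice get reinforced by a k l.\<close>
definition rl_path :: "('v::finite \<Rightarrow> 'v \<Rightarrow> bool) \<Rightarrow> ('v \<Rightarrow> 'v \<Rightarrow> real) \<Rightarrow> ('v set \<Rightarrow> real)
    \<Rightarrow> ('v \<Rightarrow> 'v \<Rightarrow> real) \<Rightarrow> (nat \<Rightarrow> 'v \<Rightarrow> 'v \<Rightarrow> real) \<Rightarrow> bool" where
  "rl_path adj a p v0 V \<longleftrightarrow> V 0 = v0 \<and>
     (\<forall>n. \<exists>c W. (\<forall>k. (\<exists>l. adj k l) \<longrightarrow> adj k (c k)) \<and> p W > 0 \<and>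
        (\<forall>k l. V (Suc n) k l = V n k l +
           (if k \<in> W \<and> l \<in> W \<and> adj k l \<and> c k = l \<and> c l = k then a k l else 0)))"

end

theory Submission
  imports Defs
begin

lemma sum_two_le: "X \<le> Z \<Longrightarrow> Y \<le> Z \<Longrightarrow> Z \<le> e/4 \<Longrightarrow> X + Y \<le> (e::real)/2"
  by linarith

lemma tri_split: "(x::real) - z = (x - y) + (y - z)"
  by simp

lemma key_ineq:
  fixes c A e T v u w :: real
  assumes "0 \<le> c" "c \<le> A" "0 < e" "0 < T" "e*T \<le> v" "v \<le> u" "v \<le> w" "4*A^2/e^3 \<le> T" "0 \<le> A"
  shows "c*T*v/(u*w) - c*T*v/((u+A)*(w+A)) \<le> e/2"
proof -
  have v0: "v > 0" using assms by (meson mult_pos_pos order_less_le_trans)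
  have u0: "u > 0" "w > 0" "u+A > 0" "w+A>0" using v0 assms by auto
  have base: "c*A/(e^2*T) \<le> e/4"
  proof -
    have "c*A \<le> A^2" using assms by (simp add: power2_eq_square mult_right_mono)
    also have "A^2 \<le> e^3*T/4" using assms(8) assms(3) by (simp add: field_simps)
    finally have "c*A \<le> e^3*T/4" .
    then show ?thesis using assms(3,4) by (simp add: field_simps power3_eq_cube power2_eq_square)
  qed
  have D1: "c*T*v/(u*w) - c*T*v/((u+A)*w) = c*T*v*A/(u*(u+A)*w)"
  proof -
    have "c*T*v/(u*w) - c*T*v/((u+A)*w) = (c*T*v*((u+A)*w) - c*T*v*(u*w))/((u*w)*((u+A)*w))"
      using u0 by (simp add: diff_frac_eq)
    also have "\<dots> = (c*T*v*A*w)/((u*(u+A)*w)*w)" by (simp add: algebra_simps)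
    also have "\<dots> = c*T*v*A/(u*(u+A)*w)" using u0 by simp
    finally show ?thesis .
  qed
  have D2: "c*T*v/((u+A)*w) - c*T*v/((u+A)*(w+A)) = c*T*v*A/((u+A)*w*(w+A))"
  proof -
    have "c*T*v/((u+A)*w) - c*T*v/((u+A)*(w+A)) = (c*T*v*((u+A)*(w+A)) - c*T*v*((u+A)*w))/(((u+A)*w)*((u+A)*(w+A)))"
      using u0 by (simp add: diff_frac_eq)
    also have "\<dots> = (c*T*v*A*(u+A))/(((u+A)*w*(w+A))*(u+A))" by (simp add: algebra_simps)
    also have "\<dots> = c*T*v*A/((u+A)*w*(w+A))" using u0 by simp
    finally show ?thesis .
  qed
  have B1: "c*T*v*A/(u*(u+A)*w) \<le> c*A/(e^2*T)"
  proof -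
    have "c*T*v*A/(u*(u+A)*w) \<le> c*T*v*A/(u*u*w)"
      apply (rule divide_left_mono) using u0 v0 assms by (auto intro!: mult_nonneg_nonneg mult_right_mono mult_pos_pos)
    also have "\<dots> = (c*T*A/(u*u)) * (v/w)" using u0 by simp
    also have "\<dots> \<le> c*T*A/(u*u)"
      apply (rule mult_left_le) using u0 v0 assms by auto
    also have "\<dots> \<le> c*T*A/((e*T)*(e*T))"
      apply (rule divide_left_mono) using u0 v0 assms by (auto intro!: mult_mono mult_nonneg_nonneg)
    also have "\<dots> = c*A/(e^2*T)" using assms by (simp add: power2_eq_square)
    finally show ?thesis .
  qed
  have B2: "c*T*v*A/((u+A)*w*(w+A)) \<le> c*A/(e^2*T)"
  proof -
    have "c*T*v*A/((u+A)*w*(w+A)) \<le> c*T*v*A/(u*w*w)"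
      apply (rule divide_left_mono) using u0 v0 assms by (auto intro!: mult_nonneg_nonneg mult_mono mult_pos_pos)
    also have "\<dots> = (c*T*A/(w*w)) * (v/u)" using u0 by (simp add: ac_simps)
    also have "\<dots> \<le> c*T*A/(w*w)"
      apply (rule mult_left_le) using u0 v0 assms by auto
    also have "\<dots> \<le> c*T*A/((e*T)*(e*T))"
      apply (rule divide_left_mono) using u0 v0 assms by (auto intro!: mult_mono mult_nonneg_nonneg)
    also have "\<dots> = c*A/(e^2*T)" using assms by (simp add: power2_eq_square)
    finally show ?thesis .
  qed
  have split: "c*T*v/(u*w) - c*T*v/((u+A)*(w+A)) = (c*T*v/(u*w) - c*T*v/((u+A)*w)) + (c*T*v/((u+A)*w) - c*T*v/((u+A)*(w+A)))"
    by (rule tri_split)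
  show ?thesis unfolding split D1 D2 by (rule sum_two_le[OF B1 B2 base])
qed


lemma sum_pairs_UNIV:
  fixes f :: "'v::finite \<Rightarrow> 'v \<Rightarrow> real"
  shows "(\<Sum>(k,l)\<in>UNIV. f k l) = (\<Sum>k\<in>UNIV. \<Sum>l\<in>UNIV. f k l)"
proof -
  have "(\<Sum>k\<in>UNIV. \<Sum>l\<in>UNIV. f k l) = (\<Sum>(k,l)\<in>UNIV \<times> UNIV. f k l)"
    by (rule sum.cartesian_product)
  then show ?thesis by (simp only: UNIV_Times_UNIV)
qed

lemma sum_sub_le:
  fixes f :: "'v::finite \<Rightarrow> 'v \<Rightarrow> real"
  assumes "\<And>k l. f k l \<ge> 0"
  shows "(\<Sum>(k,l)\<in>S. f k l) \<le> (\<Sum>k\<in>UNIV. \<Sum>l\<in>UNIV. f k l)"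
proof -
  have "(\<Sum>(k,l)\<in>S. f k l) \<le> (\<Sum>(k,l)\<in>UNIV. f k l)"
    by (rule sum_mono2) (auto simp: assms)
  then show ?thesis by (simp add: sum_pairs_UNIV)
qed

lemma xrow_xnorm: "xrow (xnorm V) k = (\<Sum>l\<in>UNIV. V k l) / Tot V"
  by (simp add: xrow_def xnorm_def sum_divide_distrib)

theorem lemma7:
  fixes adj :: "'v::finite \<Rightarrow> 'v \<Rightarrow> bool" and a :: "'v \<Rightarrow> 'v \<Rightarrow> real" and eps :: real
  assumes adj_sym: "\<And>i j. adj i j \<longleftrightarrow> adj j i"
    and adj_irrefl: "\<And>i. \<not> adj i i"
    and a_sym: "\<And>i j. a i j = a j i"
    and a_nonneg: "\<And>i j. a i j \<ge> 0"
    and a_adj: "\<And>i j. a i j > 0 \<Longrightarrow> adj i j"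
    and eps_pos: "eps > 0"
  shows "\<exists>C > 0. \<forall>(p :: 'v set \<Rightarrow> real) v0 V n i j.
     (\<forall>W. p W \<ge> 0) \<longrightarrow> (\<Sum>W\<in>UNIV. p W) = 1 \<longrightarrow>
     (\<exists>k l. a k l * pp adj p k l > 0) \<longrightarrow>
     (\<forall>k l. v0 k l = v0 l k \<and> v0 k l \<ge> 0 \<and> (v0 k l > 0 \<longleftrightarrow> adj k l)) \<longrightarrow>
     rl_path adj a p v0 V \<longrightarrow>
     adj i j \<longrightarrow> Tot (V n) \<ge> C \<longrightarrow>
     xnorm (V n) \<in> Uset adj a p v0 i j eps \<longrightarrow>
     \<bar>Hfun adj a p (xnorm (V (Suc n))) - Hfun adj a p (xnorm (V n))\<bar> < eps / 2 \<longrightarrow>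
     xnorm (V (Suc n)) \<in> Uset adj a p v0 i j (2 * eps)"
proof -
  define A where "A = (\<Sum>k\<in>UNIV. \<Sum>l\<in>UNIV. a k l)"
  have A0: "A \<ge> 0" unfolding A_def by (auto intro!: sum_nonneg a_nonneg)
  have rowA: "(\<Sum>l\<in>UNIV. a k l) \<le> A" for k
    unfolding A_def by (rule member_le_sum) (auto intro!: sum_nonneg a_nonneg)
  have aA: "a k l \<le> A" for k l
    using rowA[of k] member_le_sum[of l UNIV "a k"] a_nonneg by fastforce
  define C where "C = 1 + A/eps + 4*A^2/eps^3"
  have Cge: "C \<ge> 1" "C \<ge> A/eps" "C \<ge> 4*A^2/eps^3" using A0 eps_pos by (auto simp: C_def)
  show ?thesis
  proof (intro exI[of _ C] conjI allI impI)
    show "C > 0" using Cge by linarith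
    fix p :: "'v set \<Rightarrow> real" and v0 V n i j
    assume p0: "\<forall>W. p W \<ge> 0" and p1: "(\<Sum>W\<in>UNIV. p W) = 1"
      and ex: "\<exists>k l. a k l * pp adj p k l > 0"
      and v0: "\<forall>k l. v0 k l = v0 l k \<and> v0 k l \<ge> 0 \<and> (v0 k l > 0 \<longleftrightarrow> adj k l)"
      and path: "rl_path adj a p v0 V" and adjij: "adj i j" and TC: "Tot (V n) \<ge> C"
      and xU: "xnorm (V n) \<in> Uset adj a p v0 i j eps"
      and Hd: "\<bar>Hfun adj a p (xnorm (V (Suc n))) - Hfun adj a p (xnorm (V n))\<bar> < eps / 2"
    define T where "T = Tot (V n)"
    define x where "x = xnorm (V n)"
    define V' where "V' = V (Suc n)"
    define T' where "T' = Tot V'"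
    define x' where "x' = xnorm V'"
    define S where "S = {(k,l). a k l * pp adj p k l > 0}"
    have Tpos: "T > 0" using TC Cge by (simp add: T_def)
    have TA: "A/T \<le> eps"
    proof -
      have "A \<le> C*eps" using Cge eps_pos by (simp add: pos_divide_le_eq)
      also have "\<dots> \<le> T*eps" using TC eps_pos by (simp add: T_def mult_right_mono)
      finally show ?thesis using Tpos by (simp add: pos_divide_le_eq mult.commute)
    qed
    have TA2: "4*A^2/eps^3 \<le> T" using TC Cge by (simp add: T_def)
    obtain c W where pW: "p W > 0" and step: "\<forall>k l. V' k l = V n k l +
           (if k \<in> W \<and> l \<in> W \<and> adj k l \<and> c k = l \<and> c l = k then a k l else 0)"
      using path unfolding rl_path_def V'_def by blast
    define d where "d k l = (if k \<in> W \<and> l \<in> W \<and> adj k l \<and> c k = l \<and> c l = k then a k l else 0)" for k l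
    have V'd: "V' k l = V n k l + d k l" for k l using step by (simp add: d_def)
    have d0: "d k l \<ge> 0" for k l by (simp add: d_def a_nonneg)
    have da: "d k l \<le> a k l" for k l by (simp add: d_def a_nonneg)
    have dsym: "d k l = d l k" for k l using adj_sym a_sym by (auto simp: d_def)
    have dadj: "\<not> adj k l \<Longrightarrow> d k l = 0" for k l by (simp add: d_def)
    have pp_le1: "pp adj p k l \<le> 1" for k l
    proof -
      have "(\<Sum>W \<in> {W. k \<in> W \<and> l \<in> W}. p W) \<le> (\<Sum>W\<in>UNIV. p W)"
        by (rule sum_mono2) (auto simp: p0)
      then show ?thesis using p1 by (simp add: pp_def)
    qed
    have pp0: "pp adj p k l \<ge> 0" for k l
      by (simp add: pp_def sum_nonneg p0)
    have dS: "d k l > 0 \<Longrightarrow> (k,l) \<in> S" for k l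
    proof -
      assume "d k l > 0"
      then have h: "k \<in> W" "l \<in> W" "adj k l" "a k l > 0" by (auto simp: d_def split: if_splits)
      have "p W \<le> (\<Sum>W \<in> {W. k \<in> W \<and> l \<in> W}. p W)"
        by (rule member_le_sum) (use h p0 in auto)
      then have "pp adj p k l > 0" using h pW by (simp add: pp_def)
      then show ?thesis using h by (simp add: S_def)
    qed
    have xD: "x \<in> Delta adj a p v0" using xU by (simp add: x_def Uset_def)
    have Vx: "V n k l = x k l * T" for k l using Tpos by (simp add: x_def xnorm_def T_def)
    have xsym: "x k l = x l k" and xnn: "x k l \<ge> 0" and xadj: "\<not> adj k l \<Longrightarrow> x k l = 0" for k l
      using xD by (auto simp: Delta_def)
    have Vsym: "V n k l = V n l k" for k l using Vx xsym by simp
    have Vnn: "V n k l \<ge> 0" for k l using Vx xnn Tpos by simp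
    have Vadj: "\<not> adj k l \<Longrightarrow> V n k l = 0" for k l using Vx xadj by simp
    define D where "D = (\<Sum>k\<in>UNIV. \<Sum>l\<in>UNIV. d k l)"
    have D0: "D \<ge> 0" unfolding D_def by (auto intro!: sum_nonneg d0)
    have T'eq: "T' = T + D" unfolding T'_def T_def D_def Tot_def V'd by (simp add: sum.distrib)
    have T'pos: "T' > 0" using T'eq Tpos D0 by linarith
    define row where "row k = (\<Sum>l\<in>UNIV. V n k l)" for k
    define drow where "drow k = (\<Sum>l\<in>UNIV. d k l)" for k
    have drow0: "drow k \<ge> 0" for k unfolding drow_def by (auto intro!: sum_nonneg d0)
    have drowA: "drow k \<le> A" for k
    proof -
      have "drow k \<le> (\<Sum>l\<in>UNIV. a k l)" unfolding drow_def by (rule sum_mono) (rule da)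
      then show ?thesis using rowA[of k] by linarith
    qed
    have row': "(\<Sum>l\<in>UNIV. V' k l) = row k + drow k" for k
      unfolding row_def drow_def V'd by (simp add: sum.distrib)
    have xrow_x: "xrow x k = row k / T" for k by (simp add: x_def xrow_xnorm row_def T_def)
    have xrow_x': "xrow x' k = (row k + drow k) / T'" for k by (simp add: x'_def xrow_xnorm row' T'_def)
    have x'V: "x' k l = V' k l / T'" for k l by (simp add: x'_def xnorm_def T'_def)
    have x'D: "x' \<in> Delta adj a p v0"
    proof -
      have c1: "\<forall>k l. x' k l = x' l k \<and> x' k l \<ge> 0 \<and> (\<not> adj k l \<longrightarrow> x' k l = 0)"
        using Vsym dsym Vnn d0 Vadj dadj T'pos by (auto simp: x'V V'd)
      have c2: "(\<Sum>k\<in>UNIV. \<Sum>l\<in>UNIV. x' k l) = 1"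
        using T'pos by (simp add: x'V sum_divide_distrib[symmetric] T'_def Tot_def)
      define sV where "sV = (\<Sum>(k,l)\<in>S. V n k l)"
      have sVT: "sV \<le> T" unfolding sV_def T_def Tot_def by (rule sum_sub_le) (rule Vnn)
      have sx: "(\<Sum>(k,l)\<in>S. x k l) = sV / T"
        unfolding sV_def using Tpos by (simp add: Vx sum_distrib_right[symmetric] case_prod_beta)
      have h1x: "h1 adj a p v0 \<le> sV / T" using xD sx by (simp add: Delta_def S_def)
      have sd: "(\<Sum>(k,l)\<in>S. d k l) = D"
      proof -
        have "(\<Sum>(k,l)\<in>S. d k l) = (\<Sum>(k,l)\<in>UNIV. d k l)"
          apply (rule sum.mono_neutral_left)
          using dS d0 by (auto simp: less_le)
        then show ?thesis by (simp add: sum_pairs_UNIV D_def)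
      qed
      have sx': "(\<Sum>(k,l)\<in>S. x' k l) = (sV + D) / T'"
        unfolding sV_def using sd by (simp add: x'V V'd sum_divide_distrib[symmetric] case_prod_beta sum.distrib)
      have "sV / T \<le> (sV + D) / T'"
        using sVT D0 Tpos T'eq by (simp add: divide_simps) (simp add: algebra_simps mult_left_mono)
      then have c3: "(\<Sum>(k,l)\<in>S. x' k l) \<ge> h1 adj a p v0" using h1x sx' by linarith
      show ?thesis using c1 c2 c3 by (simp add: Delta_def S_def)
    qed
    have xij_close: "x' i j \<le> x i j + A/T"
    proof -
      have "x' i j = V' i j / T'" by (rule x'V)
      also have "\<dots> \<le> (V n i j + A) / T'"
        using V'd[of i j] da[of i j] aA[of i j] T'pos by (simp add: divide_right_mono)
      also have "\<dots> \<le> (V n i j + A) / T"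
        using T'eq D0 Tpos Vnn[of i j] A0 by (intro divide_left_mono) auto
      also have "\<dots> = x i j + A/T" using Tpos by (simp add: Vx add_divide_distrib)
      finally show ?thesis .
    qed
    show "x' \<in> Uset adj a p v0 i j (2 * eps)"
    proof (cases "x' i j < 2*eps")
      case True then show ?thesis using x'D by (simp add: Uset_def)
    next
      case False
      then have x'big: "x' i j \<ge> 2*eps" by simp
      have xbig: "x i j \<ge> eps" using x'big xij_close TA by linarith
      then have ycase: "yfun adj a p x i j - Hfun adj a p x \<ge> - eps"
        using xU by (simp add: Uset_def x_def)
      define cc where "cc = a i j * pp adj p i j"
      have cc0: "cc \<ge> 0" by (simp add: cc_def a_nonneg pp0)
      have ccA: "cc \<le> A" using aA[of i j] pp_le1[of i j] a_nonneg[of i j] pp0[of i j]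
        unfolding cc_def by (metis mult_left_le order_trans)
      define v u w where "v = V n i j" and "u = row i" and "w = row j"
      have vT: "eps*T \<le> v" using xbig Tpos by (simp add: v_def Vx mult.commute mult_right_mono)
      have vu: "v \<le> u" unfolding v_def u_def row_def by (rule member_le_sum) (auto simp: Vnn)
      have vw: "v \<le> w" unfolding v_def w_def row_def using Vsym[of i j]
        using member_le_sum[of i UNIV "V n j"] Vnn by simp
      have vpos: "v > 0" using vT eps_pos Tpos by (meson mult_pos_pos order_less_le_trans)
      have upos: "u > 0" "w > 0" using vpos vu vw by auto
      have yx: "yfun adj a p x i j = cc*T*v/(u*w)"
        using Tpos upos by (simp add: yfun_def cc_def xrow_x Vx v_def u_def w_def field_simps)
      have yx': "yfun adj a p x' i j = cc*T'*V' i j/((u + drow i)*(w + drow j))"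
        using T'pos upos drow0 by (simp add: yfun_def cc_def xrow_x' x'V u_def w_def add_pos_nonneg field_simps)
      have low: "cc*T*v/((u+A)*(w+A)) \<le> cc*T'*V' i j/((u + drow i)*(w + drow j))"
      proof (rule frac_le)
        show "0 \<le> cc*T'*V' i j" using cc0 T'pos Vnn[of i j] d0[of i j] by (simp add: V'd)
        show "cc*T*v \<le> cc*T'*V' i j" using cc0 Tpos T'eq D0 Vnn[of i j] d0[of i j]
          by (simp add: V'd v_def mult_mono mult_left_mono)
        show "0 < (u + drow i)*(w + drow j)" using upos drow0 by (simp add: add_pos_nonneg)
        show "(u + drow i)*(w + drow j) \<le> (u+A)*(w+A)"
          using upos drow0 drowA A0 by (intro mult_mono) auto
      qed
      have "cc*T*v/(u*w) - cc*T*v/((u+A)*(w+A)) \<le> eps/2"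
        by (rule key_ineq) (use cc0 ccA eps_pos Tpos vT vu vw TA2 A0 in auto)
      then have "yfun adj a p x' i j - yfun adj a p x i j \<ge> - eps/2"
        using low yx yx' by linarith
      then have "yfun adj a p x' i j - Hfun adj a p x' \<ge> - (2*eps)"
        using ycase Hd unfolding x_def x'_def V'_def abs_less_iff by linarith
      then show ?thesis using x'D by (simp add: Uset_def)
    qed
  qed
qed

end
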